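(* Let $\mathcal P=(S_1,\dots,S_n)$ be a partition of $V(G)$ into sets of size $r$ such that every $S_i$ is an independent set of $G$ (no edge of $G$ has both endpoints in the same $S_i$), and let $T=T_{\vec B,\mathcal P}$. Then $\mathbb E_{\vec B}(\xi)=0$, and hence $\mathbb E_{\vec B}(\hat t_{\mathrm{Neyman}})=\bar t$.
   Context: Let $n,p,q$ be positive integers, $r=p+q$, $G$ a finite simple graph with $|V(G)|=rn$ and no isolated vertices; $\mathcal N(v)$ neighbor set. For each $v$, $x_v,t_v\in\mathbb R$ and $f_v:2^{\mathcal N(v)}\to\mathbb R$ with $f_v(\emptyset)=0$; outcomes $y_v=x_v+\mathbf 1_T(v)t_v+f_v(T\cap\mathcal N(v))$; $\bar t=\frac1{rn}\sum_vt_v$. $\sigma_T(v)=q$ if $v\in T$, $-p$ otherwise; for $|T|=pn$, $\hat t_{\mathrm{Neyman}}=\frac1{pqn}\sum_v\sigma_T(v)y_v$ and $\xi=\frac1{pqn}\sum_v\sigma_T(v)f_v(T\cap\mathcal N(v))$. Restricted randomization: $S_i=\{w_i^1,\dots,w_i^r\}$, $B_1,\dots,B_n$ i.i.d. uniform $p$-subsets of $\{1,\dots,r\}$, $T_{\vec B,\mathcal P}=\{w_i^j:j\in B_i\}$. *)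

theory Defs
  imports "HOL-Probability.Probability"
begin

definition simple_graph :: "'v set \<Rightarrow> ('v \<Rightarrow> 'v \<Rightarrow> bool) \<Rightarrow> bool" where
  "simple_graph V E \<longleftrightarrow> finite V \<and> (\<forall>u v. E u v \<longrightarrow> u \<in> V \<and> v \<in> V)
     \<and> (\<forall>u v. E u v \<longrightarrow> E v u) \<and> (\<forall>v. \<not> E v v)"

definition nbhd :: "'v set \<Rightarrow> ('v \<Rightarrow> 'v \<Rightarrow> bool) \<Rightarrow> 'v \<Rightarrow> 'v set" where
  "nbhd V E v = {u \<in> V. E v u}"

definition outcome :: "'v set \<Rightarrow> ('v \<Rightarrow> 'v \<Rightarrow> bool) \<Rightarrow> ('v \<Rightarrow> real) \<Rightarrow> ('v \<Rightarrow> real)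
    \<Rightarrow> ('v \<Rightarrow> 'v set \<Rightarrow> real) \<Rightarrow> 'v set \<Rightarrow> 'v \<Rightarrow> real" where
  "outcome V E x t f T v = x v + (if v \<in> T then t v else 0) + f v (T \<inter> nbhd V E v)"

definition sigmaT :: "nat \<Rightarrow> nat \<Rightarrow> 'v set \<Rightarrow> 'v \<Rightarrow> real" where
  "sigmaT p q T v = (if v \<in> T then real q else - real p)"

definition neyman :: "'v set \<Rightarrow> ('v \<Rightarrow> 'v \<Rightarrow> bool) \<Rightarrow> nat \<Rightarrow> nat \<Rightarrow> nat \<Rightarrow> ('v \<Rightarrow> real)
    \<Rightarrow> ('v \<Rightarrow> real) \<Rightarrow> ('v \<Rightarrow> 'v set \<Rightarrow> real) \<Rightarrow> 'v set \<Rightarrow> real" where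
  "neyman V E n p q x t f T =
     (\<Sum>v\<in>V. sigmaT p q T v * outcome V E x t f T v) / (real p * real q * real n)"

definition xi :: "'v set \<Rightarrow> ('v \<Rightarrow> 'v \<Rightarrow> bool) \<Rightarrow> nat \<Rightarrow> nat \<Rightarrow> nat
    \<Rightarrow> ('v \<Rightarrow> 'v set \<Rightarrow> real) \<Rightarrow> 'v set \<Rightarrow> real" where
  "xi V E n p q f T =
     (\<Sum>v\<in>V. sigmaT p q T v * f v (T \<inter> nbhd V E v)) / (real p * real q * real n)"

definition tbar :: "'v set \<Rightarrow> nat \<Rightarrow> nat \<Rightarrow> ('v \<Rightarrow> real) \<Rightarrow> real" where
  "tbar V r n t = (\<Sum>v\<in>V. t v) / (real r * real n)"

definition Bvecs :: "nat \<Rightarrow> nat \<Rightarrow> nat \<Rightarrow> (nat \<Rightarrow> nat set) set" where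
  "Bvecs n r p = PiE {..<n} (\<lambda>_. {B. B \<subseteq> {1..r} \<and> card B = p})"

text \<open>Law of vec B: B_i i.i.d. uniform, i.e. uniform on Bvecs.\<close>
definition Bdist :: "nat \<Rightarrow> nat \<Rightarrow> nat \<Rightarrow> (nat \<Rightarrow> nat set) pmf" where
  "Bdist n r p = pmf_of_set (Bvecs n r p)"

text \<open>T_{B,P} = {w_i^j : j \<in> B_i}, with S_i = {w i j | j \<in> {1..r}}, i < n.\<close>
definition Tset :: "nat \<Rightarrow> (nat \<Rightarrow> nat \<Rightarrow> 'v) \<Rightarrow> (nat \<Rightarrow> nat set) \<Rightarrow> 'v set" where
  "Tset n w B = {w i j | i j. i < n \<and> j \<in> B i}"

end

theory Submission
  imports Defs
begin

lemma sum_PiE_split: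
  fixes a :: "'b \<Rightarrow> real" and h :: "('a \<Rightarrow> 'b) \<Rightarrow> real"
  assumes "i \<notin> J" "finite J" "finite (F i)" "\<And>k. k\<in>J \<Longrightarrow> finite (F k)"
  shows "(\<Sum>B\<in>PiE (insert i J) F. a (B i) * h (restrict B J))
       = (\<Sum>y\<in>F i. a y) * (\<Sum>g\<in>PiE J F. h g)"
proof -
  have "(\<Sum>B\<in>PiE (insert i J) F. a (B i) * h (restrict B J))
     = (\<Sum>(y,g)\<in>F i \<times> PiE J F. a y * h g)"
  proof -
    have restr: "restrict (g(i := y)) J = g" if "g \<in> PiE J F" for g y
      using assms(1) that by (auto simp: PiE_def extensional_def fun_eq_iff)
    show ?thesis
    unfolding PiE_insert_eq
    apply (subst sum.reindex[OF inj_combinator[OF assms(1)]])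
    apply (rule sum.cong, simp)
    using restr by auto
  qed
  also have "\<dots> = (\<Sum>y\<in>F i. a y) * (\<Sum>g\<in>PiE J F. h g)"
    by (simp add: sum.cartesian_product[symmetric] sum_product)
  finally show ?thesis .
qed

lemma card_contain:
  assumes "j \<in> {1..r}" and that: "p > 0"
  shows "card {y. y \<subseteq> {1..(r::nat)} \<and> card y = p \<and> j \<in> y} = (r - 1) choose (p - 1)"
proof -
  have eq: "{y. y \<subseteq> {1..r} \<and> card y = p \<and> j \<in> y}
      = insert j ` {A. A \<subseteq> {1..r} - {j} \<and> card A = p - 1}"
  proof (rule set_eqI, rule iffI)
    fix y assume y: "y \<in> {y. y \<subseteq> {1..r} \<and> card y = p \<and> j \<in> y}"
    then have fy: "finite y" using finite_subset by blast
    have "y = insert j (y - {j})" using y by auto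
    moreover have "card (y - {j}) = p - 1" using y fy by (simp add: card_Diff_singleton)
    ultimately show "y \<in> insert j ` {A. A \<subseteq> {1..r} - {j} \<and> card A = p - 1}"
      using y by blast
  next
    fix y assume "y \<in> insert j ` {A. A \<subseteq> {1..r} - {j} \<and> card A = p - 1}"
    then obtain A where A: "A \<subseteq> {1..r} - {j}" "card A = p - 1" "y = insert j A" by blast
    have "finite A" using A(1) finite_subset by blast
    moreover have "j \<notin> A" using A(1) by blast
    ultimately have "card y = p" using A that by simp
    then show "y \<in> {y. y \<subseteq> {1..r} \<and> card y = p \<and> j \<in> y}" using A assms by auto
  qed
  have inj: "inj_on (insert j) {A. A \<subseteq> {1..r} - {j} \<and> card A = p - 1}"
    by (rule inj_onI) blast
  have "card {y. y \<subseteq> {1..r} \<and> card y = p \<and> j \<in> y}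
      = card {A. A \<subseteq> {1..r} - {j} \<and> card A = p - 1}"
    unfolding eq by (rule card_image[OF inj])
  also have "\<dots> = card ({1..r} - {j}) choose (p - 1)" by (rule n_subsets) simp
  also have "card ({1..r} - {j}) = r - 1" using assms by simp
  finally show ?thesis .
qed

lemma finite_F0: "finite {B. B \<subseteq> {1..(r::nat)} \<and> card B = p}"
  by (rule finite_subset[of _ "Pow {1..r}"]) auto

lemma c1_eq:
  assumes "j \<in> {1..r}" "p > 0"
  shows "real r * real (card ({B. B \<subseteq> {1..(r::nat)} \<and> card B = p} \<inter> {y. j \<in> y}))
       = real p * real (card {B. B \<subseteq> {1..(r::nat)} \<and> card B = p})"
proof -
  have "{B. B \<subseteq> {1..(r::nat)} \<and> card B = p} \<inter> {y. j \<in> y} = {y. y \<subseteq> {1..r} \<and> card y = p \<and> j \<in> y}"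
    by auto
  then have "card ({B. B \<subseteq> {1..(r::nat)} \<and> card B = p} \<inter> {y. j \<in> y}) = (r - 1) choose (p - 1)"
    using card_contain[OF assms] by simp
  moreover have "card {B. B \<subseteq> {1..(r::nat)} \<and> card B = p} = r choose p"
    using n_subsets[of "{1..r}" p] by simp
  moreover have "p * (r choose p) = r * ((r - 1) choose (p - 1))"
    using times_binomial_minus1_eq[OF assms(2)] by simp
  ultimately show ?thesis by (metis of_nat_mult)
qed

lemma a_sum:
  assumes "j \<in> {1..r}" "p > 0" "r = p + q"
  shows "(\<Sum>y\<in>{B. B \<subseteq> {1..(r::nat)} \<and> card B = p}. (if j \<in> y then real q else - real p)) = 0"
proof -
  let ?F = "{B. B \<subseteq> {1..(r::nat)} \<and> card B = p}"
  have fin: "finite ?F" by (rule finite_F0)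
  have "(\<Sum>y\<in>?F. (if j \<in> y then real q else - real p))
     = real q * card (?F \<inter> {y. j \<in> y}) - real p * card (?F \<inter> - {y. j \<in> y})"
    by (subst sum.If_cases[OF fin]) simp
  also have "card (?F \<inter> - {y. j \<in> y}) = card ?F - card (?F \<inter> {y. j \<in> y})"
  proof -
    have "?F \<inter> - {y. j \<in> y} = ?F - (?F \<inter> {y. j \<in> y})" by blast
    then show ?thesis using fin by (simp add: card_Diff_subset)
  qed
  also have "card (?F \<inter> {y. j \<in> y}) \<le> card ?F" using fin by (simp add: card_mono)
  then have "real (card ?F - card (?F \<inter> {y. j \<in> y})) = real (card ?F) - real (card (?F \<inter> {y. j \<in> y}))"
    by simp
  finally have "(\<Sum>y\<in>?F. (if j \<in> y then real q else - real p))
    = real r * card (?F \<inter> {y. j \<in> y}) - real p * card ?F"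
    using assms(3) by (simp add: algebra_simps)
  then show ?thesis using c1_eq[OF assms(1,2)] by simp
qed

lemma b_sum:
  shows "(\<Sum>y\<in>{B. B \<subseteq> {1..(r::nat)} \<and> card B = p}. (if j \<in> y then real q else 0))
     = real q * card ({B. B \<subseteq> {1..(r::nat)} \<and> card B = p} \<inter> {y. j \<in> y})"
  by (subst sum.If_cases[OF finite_F0]) simp

theorem mainTheorem11:
  fixes V :: "'v set" and E :: "'v \<Rightarrow> 'v \<Rightarrow> bool"
    and n p q r :: nat
    and x t :: "'v \<Rightarrow> real" and f :: "'v \<Rightarrow> 'v set \<Rightarrow> real"
    and w :: "nat \<Rightarrow> nat \<Rightarrow> 'v"
  assumes "n > 0" "p > 0" "q > 0" "r = p + q"
    and "simple_graph V E"
    and "card V = r * n"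
    and "\<forall>v\<in>V. \<exists>u. E v u"
    and "\<forall>v\<in>V. f v {} = 0"
    and "bij_betw (\<lambda>(i, j). w i j) ({..<n} \<times> {1..r}) V"
    and "\<forall>i<n. \<forall>j\<in>{1..r}. \<forall>k\<in>{1..r}. \<not> E (w i j) (w i k)"
  shows "measure_pmf.expectation (Bdist n r p) (\<lambda>B. xi V E n p q f (Tset n w B)) = 0
       \<and> measure_pmf.expectation (Bdist n r p) (\<lambda>B. neyman V E n p q x t f (Tset n w B))
           = tbar V r n t"
proof -
  note bij = assms(9)
  define F0 where "F0 = {B. B \<subseteq> {1..r} \<and> card B = p}"
  define F where "F = (\<lambda>_::nat. F0)"
  define I where "I = {..<n}"
  define C where "C = card F0"
  define K where "K = C ^ (n - 1)"
  have BV: "Bvecs n r p = PiE I F" by (simp add: Bvecs_def F_def F0_def I_def)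
  have finF0: "finite F0" unfolding F0_def by (rule finite_F0)
  have finI: "finite I" unfolding I_def by simp
  have finBV: "finite (PiE I F)" using finF0 finI by (simp add: finite_PiE F_def)
  have "{1..p} \<in> F0" unfolding F0_def using assms(4) by auto
  then have "(\<lambda>k\<in>I. {1..p}) \<in> PiE I F" by (simp add: F_def)
  then have neBV: "PiE I F \<noteq> {}" by blast
  have cardBV: "card (PiE I F) = C * K"
    using assms(1) finI by (simp add: card_PiE F_def C_def K_def I_def power_eq_if)
  have Cpos: "C > 0" using \<open>{1..p} \<in> F0\<close> finF0 C_def card_gt_0_iff by blast
  have cardJ: "card (PiE (I - {i}) F) = K" if "i < n" for i
    using that finI by (simp add: card_PiE F_def C_def K_def I_def)
  have inj: "inj_on (\<lambda>(i, j). w i j) ({..<n} \<times> {1..r})" using bij bij_betw_def by blast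
  have memT: "(w i j \<in> Tset n w B) \<longleftrightarrow> j \<in> B i"
    if "i < n" "j \<in> {1..r}" "B \<in> PiE I F" for i j B
  proof
    assume "w i j \<in> Tset n w B"
    then obtain k l where kl: "k < n" "l \<in> B k" "w i j = w k l" unfolding Tset_def by blast
    have "B k \<in> F0" using that(3) kl(1) by (auto simp: F_def I_def PiE_def)
    then have "l \<in> {1..r}" using kl(2) by (auto simp: F0_def)
    then have "(i, j) = (k, l)" using inj_onD[OF inj, of "(i,j)" "(k,l)"] kl that(1,2) by simp
    then show "j \<in> B i" using kl by simp
  next
    assume "j \<in> B i" then show "w i j \<in> Tset n w B" unfolding Tset_def using that by blast
  qed
  define G where "G = (\<lambda>i j (g::nat \<Rightarrow> nat set). {w k l | k l. k \<in> I - {i} \<and> l \<in> g k} \<inter> nbhd V E (w i j))"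
  have nbT: "Tset n w B \<inter> nbhd V E (w i j) = G i j (restrict B (I - {i}))"
    if "i < n" "j \<in> {1..r}" "B \<in> PiE I F" for i j B
  proof (rule set_eqI, rule iffI)
    fix u assume u: "u \<in> Tset n w B \<inter> nbhd V E (w i j)"
    then obtain k l where kl: "k < n" "l \<in> B k" "u = w k l" unfolding Tset_def by blast
    have "B k \<in> F0" using that(3) kl(1) by (auto simp: F_def I_def PiE_def)
    then have "l \<in> {1..r}" using kl(2) by (auto simp: F0_def)
    have "E (w i j) u" using u by (simp add: nbhd_def)
    then have "k \<noteq> i" using assms(10) that(1,2) \<open>l \<in> {1..r}\<close> kl(3) by blast
    then show "u \<in> G i j (restrict B (I - {i}))"
      unfolding G_def using kl u I_def by auto
  next
    fix u assume "u \<in> G i j (restrict B (I - {i}))"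
    then obtain k l where kl: "k < n" "k \<noteq> i" "l \<in> B k" "u = w k l" "u \<in> nbhd V E (w i j)"
      unfolding G_def I_def by auto
    then show "u \<in> Tset n w B \<inter> nbhd V E (w i j)"
      unfolding Tset_def by blast
  qed
  have Isplit: "I = insert i (I - {i})" if "i < n" for i using that I_def by auto
  have splitI: "(\<Sum>B\<in>PiE I F. a (B i) * h (restrict B (I - {i})))
      = (\<Sum>y\<in>F0. a y) * (\<Sum>g\<in>PiE (I - {i}) F. h g)" if "i < n"
    for i and a :: "nat set \<Rightarrow> real" and h :: "(nat \<Rightarrow> nat set) \<Rightarrow> real"
  proof -
    have "(\<Sum>B\<in>PiE I F. a (B i) * h (restrict B (I - {i})))
       = (\<Sum>B\<in>PiE (insert i (I - {i})) F. a (B i) * h (restrict B (I - {i})))"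
      using Isplit[OF that] by simp
    also have "\<dots> = (\<Sum>y\<in>F i. a y) * (\<Sum>g\<in>PiE (I - {i}) F. h g)"
      by (rule sum_PiE_split) (use finI finF0 in \<open>auto simp: F_def\<close>)
    finally show ?thesis by (simp add: F_def)
  qed
  define aa where "aa = (\<lambda>j (y::nat set). if j \<in> y then real q else - real p)"
  have asum: "(\<Sum>y\<in>F0. aa j y) = 0" if "j \<in> {1..r}" for j
    unfolding F0_def aa_def using a_sum[OF that assms(2,4)] by simp
  have sig: "sigmaT p q (Tset n w B) (w i j) = aa j (B i)"
    if "i < n" "j \<in> {1..r}" "B \<in> PiE I F" for i j B
    using memT[OF that] by (simp add: sigmaT_def aa_def)
  have vx: "(\<Sum>B\<in>PiE I F. sigmaT p q (Tset n w B) (w i j) * f (w i j) (Tset n w B \<inter> nbhd V E (w i j))) = 0"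
    if "i < n" "j \<in> {1..r}" for i j
  proof -
    have "(\<Sum>B\<in>PiE I F. sigmaT p q (Tset n w B) (w i j) * f (w i j) (Tset n w B \<inter> nbhd V E (w i j)))
      = (\<Sum>B\<in>PiE I F. aa j (B i) * (\<lambda>g. f (w i j) (G i j g)) (restrict B (I - {i})))"
      by (rule sum.cong) (simp_all add: sig[OF that] nbT[OF that])
    also have "\<dots> = 0" using splitI[OF that(1), where a="aa j" and h="\<lambda>g. f (w i j) (G i j g)"] asum[OF that(2)] by simp
    finally show ?thesis .
  qed
  have vn: "(\<Sum>B\<in>PiE I F. sigmaT p q (Tset n w B) (w i j) * outcome V E x t f (Tset n w B) (w i j))
       = real q * t (w i j) * real p * real C * real K / real r"
    if "i < n" "j \<in> {1..r}" for i j
  proof -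
    define bb where "bb = (\<lambda>(y::nat set). if j \<in> y then real q else 0)"
    have "(\<Sum>B\<in>PiE I F. sigmaT p q (Tset n w B) (w i j) * outcome V E x t f (Tset n w B) (w i j))
      = (\<Sum>B\<in>PiE I F. aa j (B i) * (\<lambda>g. x (w i j) + f (w i j) (G i j g)) (restrict B (I - {i}))
           + bb (B i) * (\<lambda>g. t (w i j)) (restrict B (I - {i})))"
    proof (rule sum.cong[OF refl])
      fix B assume B: "B \<in> PiE I F"
      show "sigmaT p q (Tset n w B) (w i j) * outcome V E x t f (Tset n w B) (w i j)
        = aa j (B i) * (\<lambda>g. x (w i j) + f (w i j) (G i j g)) (restrict B (I - {i}))
           + bb (B i) * (\<lambda>g. t (w i j)) (restrict B (I - {i}))"
        unfolding outcome_def sig[OF that B] nbT[OF that B] memT[OF that B]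
        by (simp add: aa_def bb_def algebra_simps)
    qed
    also have "\<dots> = (\<Sum>y\<in>F0. bb y) * (real K * t (w i j))"
      using splitI[OF that(1), where a="aa j" and h="\<lambda>g. x (w i j) + f (w i j) (G i j g)"]
        splitI[OF that(1), where a="bb" and h="\<lambda>g. t (w i j)"] asum[OF that(2)] cardJ[OF that(1)]
      by (simp add: sum.distrib)
    also have "(\<Sum>y\<in>F0. bb y) = real q * card (F0 \<inter> {y. j \<in> y})"
      unfolding bb_def F0_def by (rule b_sum)
    also have "real (card (F0 \<inter> {y. j \<in> y})) = real p * real C / real r"
    proof -
      have h: "real r * real (card (F0 \<inter> {y. j \<in> y})) = real p * real C"
        using c1_eq[OF that(2) assms(2)] unfolding F0_def C_def .
      have "real r \<noteq> 0" using assms(2,4) by simp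
      then show ?thesis using h by (simp add: eq_divide_eq mult.commute)
    qed
    finally show ?thesis by simp
  qed
  have surj: "\<exists>i j. i < n \<and> j \<in> {1..r} \<and> v = w i j" if "v \<in> V" for v
  proof -
    have "v \<in> (\<lambda>(i, j). w i j) ` ({..<n} \<times> {1..r})" using bij that unfolding bij_betw_def by simp
    then obtain ij where ij: "ij \<in> {..<n} \<times> {1..r}" "v = (\<lambda>(i, j). w i j) ij"
      by (rule imageE)
    obtain i j where "ij = (i, j)" by (cases ij)
    then show ?thesis using ij by auto
  qed
  have E1: "measure_pmf.expectation (Bdist n r p) g = (\<Sum>B\<in>PiE I F. g B) / real (C * K)" for g :: "_ \<Rightarrow> real"
    unfolding Bdist_def BV using integral_pmf_of_set[OF neBV finBV, of g] cardBV by simp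
  have X: "(\<Sum>B\<in>PiE I F. xi V E n p q f (Tset n w B)) = 0"
  proof -
    have "(\<Sum>B\<in>PiE I F. xi V E n p q f (Tset n w B))
      = (\<Sum>v\<in>V. \<Sum>B\<in>PiE I F. sigmaT p q (Tset n w B) v * f v (Tset n w B \<inter> nbhd V E v)) / (real p * real q * real n)"
      unfolding xi_def by (simp add: sum_divide_distrib[symmetric] sum.swap[of _ V])
    also have "(\<Sum>v\<in>V. \<Sum>B\<in>PiE I F. sigmaT p q (Tset n w B) v * f v (Tset n w B \<inter> nbhd V E v)) = 0"
      by (rule sum.neutral) (use surj vx in blast)
    finally show ?thesis by simp
  qed
  have N: "(\<Sum>B\<in>PiE I F. neyman V E n p q x t f (Tset n w B)) = real C * real K * tbar V r n t"
  proof -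
    have "(\<Sum>B\<in>PiE I F. neyman V E n p q x t f (Tset n w B))
      = (\<Sum>v\<in>V. \<Sum>B\<in>PiE I F. sigmaT p q (Tset n w B) v * outcome V E x t f (Tset n w B) v) / (real p * real q * real n)"
      unfolding neyman_def by (simp add: sum_divide_distrib[symmetric] sum.swap[of _ V])
    also have "(\<Sum>v\<in>V. \<Sum>B\<in>PiE I F. sigmaT p q (Tset n w B) v * outcome V E x t f (Tset n w B) v)
       = (\<Sum>v\<in>V. real q * t v * real p * real C * real K / real r)"
      by (rule sum.cong) (use surj vn in blast)+
    also have "\<dots> / (real p * real q * real n) = real C * real K * tbar V r n t"
      using assms(1,2,3) unfolding tbar_def
      by (simp add: sum_divide_distrib[symmetric] sum_distrib_left[symmetric] sum_distrib_right[symmetric] field_simps)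
    finally show ?thesis .
  qed
  show ?thesis using E1 X N Cpos by (simp add: K_def)
qed

end
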